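(* For every sequent $\Gamma\Rightarrow\Delta$: if $\mathsf{Grz_{Seq}}+\mathsf{cut}\vdash\Gamma\Rightarrow\Delta$, then $\Gamma\Rightarrow\Delta$ is provable in $\mathsf{Grz}_\infty+\mathsf{cut}$.
   Context: Formulas are built from $\bot$ and atomic propositions using $\to$ and $\Box$. A sequent is $\Gamma\Rightarrow\Delta$ with $\Gamma,\Delta$ finite multisets of formulas; $\Box\Pi$ denotes the multiset $\{\Box B:B\in\Pi\}$. Common rules: $(\to_L)$ from $\Gamma,B\Rightarrow\Delta$ and $\Gamma\Rightarrow A,\Delta$ infer $\Gamma,A\to B\Rightarrow\Delta$; $(\to_R)$ from $\Gamma,A\Rightarrow B,\Delta$ infer $\Gamma\Rightarrow A\to B,\Delta$; $(\mathsf{refl})$ from $\Gamma,B,\Box B\Rightarrow\Delta$ infer $\Gamma,\Box B\Rightarrow\Delta$; $(\mathsf{cut})$ from $\Gamma\Rightarrow A,\Delta$ and $\Gamma,A\Rightarrow\Delta$ infer $\Gamma\Rightarrow\Delta$. The finite-proof calculus $\mathsf{Grz_{Seq}}+\mathsf{cut}$ has initial sequents $\Gamma,A\Rightarrow A,\Delta$ (any $A$) and $\Gamma,\bot\Rightarrow\Delta$, the rules $(\to_L),(\to_R),(\mathsf{refl}),(\mathsf{cut})$ and $(\Box_{\mathsf{Grz}})$: from $\Box\Pi,\Box(A\to\Box A)\Rightarrow A$ infer $\Gamma,\Box\Pi\Rightarrow\Box A,\Delta$. The calculus $\mathsf{Grz}_\infty+\mathsf{cut}$ has initial sequents $\Gamma,p\Rightarrow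 p,\Delta$ ($p$ atomic) and $\Gamma,\bot\Rightarrow\Delta$, the rules $(\to_L),(\to_R),(\mathsf{refl}),(\mathsf{cut})$ and $(\Box)$: from left premise $\Gamma,\Box\Pi\Rightarrow A,\Delta$ and right premise $\Box\Pi\Rightarrow A$ infer $\Gamma,\Box\Pi\Rightarrow\Box A,\Delta$. Proofs in $\mathsf{Grz}_\infty+\mathsf{cut}$ are $\infty$-proofs: possibly infinite trees of sequents built by these rules, with leaves labelled by initial sequents, in which every infinite branch passes through a right premise of $(\Box)$ infinitely often; a sequent is provable if it labels the root of an $\infty$-proof. *)

theory Defs
  imports Main "HOL-Library.Multiset"
begin

datatype fm = Bot | Atom nat | Imp fm fm | Box fm

type_synonym sequent = "fm multiset \<times> fm multiset"

inductive grz_seq :: "fm multiset \<Rightarrow> fm multiset \<Rightarrow> bool" where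
  ax:    "grz_seq (\<Gamma> + {#A#}) ({#A#} + \<Delta>)"
| botL:  "grz_seq (\<Gamma> + {#Bot#}) \<Delta>"
| impL:  "grz_seq (\<Gamma> + {#B#}) \<Delta> \<Longrightarrow> grz_seq \<Gamma> ({#A#} + \<Delta>)
          \<Longrightarrow> grz_seq (\<Gamma> + {#Imp A B#}) \<Delta>"
| impR:  "grz_seq (\<Gamma> + {#A#}) ({#B#} + \<Delta>) \<Longrightarrow> grz_seq \<Gamma> ({#Imp A B#} + \<Delta>)"
| refl:  "grz_seq (\<Gamma> + {#B#} + {#Box B#}) \<Delta> \<Longrightarrow> grz_seq (\<Gamma> + {#Box B#}) \<Delta>"
| cut:   "grz_seq \<Gamma> ({#A#} + \<Delta>) \<Longrightarrow> grz_seq (\<Gamma> + {#A#}) \<Delta> \<Longrightarrow> grz_seq \<Gamma> \<Delta>"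
| boxGrz: "grz_seq (image_mset Box \<Pi> + {#Box (Imp A (Box A))#}) {#A#}
          \<Longrightarrow> grz_seq (\<Gamma> + image_mset Box \<Pi>) ({#Box A#} + \<Delta>)"

text \<open>A possibly infinite proof tree is given by a labelling of nodes (addresses = lists of
  child indices) with sequents and with rule names.  For binary rules, child 0
  is the left premise and child 1 the right premise.\<close>

datatype rule = RAx | RBot | RImpL | RImpR | RRefl | RCut | RBox

fun arity :: "rule \<Rightarrow> nat" where
  "arity RAx = 0" | "arity RBot = 0" | "arity RImpL = 2" | "arity RImpR = 1"
| "arity RRefl = 1" | "arity RCut = 2" | "arity RBox = 2"

inductive_set nodes :: "(nat list \<Rightarrow> rule) \<Rightarrow> nat list set" for rl where
  root: "[] \<in> nodes rl"
| child: "w \<in> nodes rl \<Longrightarrow> i < arity (rl w) \<Longrightarrow> w @ [i] \<in> nodes rl"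

fun rule_ok :: "(nat list \<Rightarrow> sequent) \<Rightarrow> rule \<Rightarrow> nat list \<Rightarrow> bool" where
  "rule_ok lab RAx w = (\<exists>\<Gamma> \<Delta> p. lab w = (\<Gamma> + {#Atom p#}, {#Atom p#} + \<Delta>))"
| "rule_ok lab RBot w = (\<exists>\<Gamma> \<Delta>. lab w = (\<Gamma> + {#Bot#}, \<Delta>))"
| "rule_ok lab RImpL w = (\<exists>\<Gamma> \<Delta> A B. lab w = (\<Gamma> + {#Imp A B#}, \<Delta>)
      \<and> lab (w @ [0]) = (\<Gamma> + {#B#}, \<Delta>) \<and> lab (w @ [1]) = (\<Gamma>, {#A#} + \<Delta>))"
| "rule_ok lab RImpR w = (\<exists>\<Gamma> \<Delta> A B. lab w = (\<Gamma>, {#Imp A B#} + \<Delta>)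
      \<and> lab (w @ [0]) = (\<Gamma> + {#A#}, {#B#} + \<Delta>))"
| "rule_ok lab RRefl w = (\<exists>\<Gamma> \<Delta> B. lab w = (\<Gamma> + {#Box B#}, \<Delta>)
      \<and> lab (w @ [0]) = (\<Gamma> + {#B#} + {#Box B#}, \<Delta>))"
| "rule_ok lab RCut w = (\<exists>\<Gamma> \<Delta> A. lab w = (\<Gamma>, \<Delta>)
      \<and> lab (w @ [0]) = (\<Gamma>, {#A#} + \<Delta>) \<and> lab (w @ [1]) = (\<Gamma> + {#A#}, \<Delta>))"
| "rule_ok lab RBox w = (\<exists>\<Gamma> \<Delta> \<Pi> A. lab w = (\<Gamma> + image_mset Box \<Pi>, {#Box A#} + \<Delta>)
      \<and> lab (w @ [0]) = (\<Gamma> + image_mset Box \<Pi>, {#A#} + \<Delta>)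
      \<and> lab (w @ [1]) = (image_mset Box \<Pi>, {#A#}))"

definition is_branch :: "(nat list \<Rightarrow> rule) \<Rightarrow> (nat \<Rightarrow> nat list) \<Rightarrow> bool" where
  "is_branch rl f \<longleftrightarrow> f 0 = [] \<and> (\<forall>n. \<exists>i < arity (rl (f n)). f (Suc n) = f n @ [i])"

definition inf_proof :: "(nat list \<Rightarrow> sequent) \<Rightarrow> (nat list \<Rightarrow> rule) \<Rightarrow> bool" where
  "inf_proof lab rl \<longleftrightarrow>
     (\<forall>w \<in> nodes rl. rule_ok lab (rl w) w) \<and>
     (\<forall>f. is_branch rl f \<longrightarrow>
        (\<forall>m. \<exists>n \<ge> m. rl (f n) = RBox \<and> f (Suc n) = f n @ [1]))"

definition grz_inf_provable :: "sequent \<Rightarrow> bool" where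
  "grz_inf_provable S \<longleftrightarrow> (\<exists>lab rl. lab [] = S \<and> inf_proof lab rl)"

end

theory Submission
  imports Defs
begin

inductive D :: "sequent set \<Rightarrow> fm multiset \<Rightarrow> fm multiset \<Rightarrow> bool" for X where
  dax:  "D X (\<Gamma> + {#Atom p#}) ({#Atom p#} + \<Delta>)"
| dbot: "D X (\<Gamma> + {#Bot#}) \<Delta>"
| dimpL: "D X (\<Gamma> + {#B#}) \<Delta> \<Longrightarrow> D X \<Gamma> ({#A#} + \<Delta>) \<Longrightarrow> D X (\<Gamma> + {#Imp A B#}) \<Delta>"
| dimpR: "D X (\<Gamma> + {#A#}) ({#B#} + \<Delta>) \<Longrightarrow> D X \<Gamma> ({#Imp A B#} + \<Delta>)"
| drefl: "D X (\<Gamma> + {#B#} + {#Box B#}) \<Delta> \<Longrightarrow> D X (\<Gamma> + {#Box B#}) \<Delta>"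
| dcut: "D X \<Gamma> ({#A#} + \<Delta>) \<Longrightarrow> D X (\<Gamma> + {#A#}) \<Delta> \<Longrightarrow> D X \<Gamma> \<Delta>"
| dbox: "D X (\<Gamma> + image_mset Box \<Pi>) ({#A#} + \<Delta>) \<Longrightarrow> (image_mset Box \<Pi>, {#A#}) \<in> X
         \<Longrightarrow> D X (\<Gamma> + image_mset Box \<Pi>) ({#Box A#} + \<Delta>)"

lemma D_mono: "D X G H \<Longrightarrow> X \<subseteq> Y \<Longrightarrow> D Y G H"
  by (induction rule: D.induct) (blast intro: D.intros)+

datatype dt = DLeaf sequent | DNode rule sequent dt dt

fun lbl :: "dt \<Rightarrow> sequent" where
  "lbl (DLeaf S) = S" | "lbl (DNode r S a b) = S"

fun rul :: "dt \<Rightarrow> rule" where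
  "rul (DLeaf S) = RAx" | "rul (DNode r S a b) = r"

definition loc_ok :: "rule \<Rightarrow> sequent \<Rightarrow> sequent \<Rightarrow> sequent \<Rightarrow> bool" where
  "loc_ok r S S0 S1 = rule_ok (\<lambda>v. if v = [0] then S0 else if v = [1] then S1 else S) r []"

fun wfd :: "sequent set \<Rightarrow> dt \<Rightarrow> bool" where
  "wfd X (DLeaf S) = False"
| "wfd X (DNode r S a b) = (loc_ok r S (lbl a) (lbl b) \<and> (0 < arity r \<longrightarrow> wfd X a)
     \<and> (1 < arity r \<longrightarrow> (if r = RBox then (\<exists>S'. b = DLeaf S' \<and> S' \<in> X) else wfd X b)))"

lemma arity_le: "arity r \<le> 2"
  by (cases r) auto

lemma rule_ok_cong:
  assumes "lab w = lab' w'" "lab (w @ [0]) = lab' (w' @ [0])"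
    "arity r = 2 \<Longrightarrow> lab (w @ [1]) = lab' (w' @ [1])"
  shows "rule_ok lab r w = rule_ok lab' r w'"
  using assms by (cases r) simp_all

lemma loc_ok_transfer:
  assumes "loc_ok r (lab w) (lab (w @ [0])) S1" "arity r = 2 \<Longrightarrow> lab (w @ [1]) = S1"
  shows "rule_ok lab r w"
proof -
  have "rule_ok lab r w = loc_ok r (lab w) (lab (w @ [0])) S1"
    unfolding loc_ok_def by (rule rule_ok_cong) (use assms(2) in auto)
  then show ?thesis using assms(1) by simp
qed

fun nxt :: "(sequent \<Rightarrow> dt) \<Rightarrow> dt \<Rightarrow> nat \<Rightarrow> dt" where
  "nxt c (DNode r S a b) i = (if i = 0 then a else (case b of DLeaf S' \<Rightarrow> c S' | _ \<Rightarrow> b))"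
| "nxt c (DLeaf S) i = DLeaf S"

lemma descent:
  fixes g :: "nat \<Rightarrow> nat"
  assumes "\<forall>n\<ge>m. g (Suc n) < g n"
  shows False
proof -
  have "\<forall>k. g (m + k) + k \<le> g m"
  proof
    fix k show "g (m + k) + k \<le> g m"
    proof (induction k)
      case 0 then show ?case by simp
    next
      case (Suc k)
      have "g (Suc (m + k)) < g (m + k)" using assms by simp
      then show ?case using Suc.IH by simp
    qed
  qed
  then have "g (m + Suc (g m)) + Suc (g m) \<le> g m" by blast
  then show False by simp
qed

lemma thmA:
  assumes hX: "\<forall>S\<in>X. \<exists>t. wfd X t \<and> lbl t = S" and h0: "wfd X t0"
  shows "grz_inf_provable (lbl t0)"
proof -
  define c where "c = (\<lambda>S. SOME t. wfd X t \<and> lbl t = S)"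
  have c: "wfd X (c S) \<and> lbl (c S) = S" if "S \<in> X" for S
    unfolding c_def using hX that by (metis (mono_tags, lifting) someI_ex)
  define st where "st = (\<lambda>w. foldl (nxt c) t0 w)"
  have st_snoc: "st (w @ [i]) = nxt c (st w) i" for w i by (simp add: st_def)
  have st0: "st [] = t0" by (simp add: st_def)
  define lab where "lab = (\<lambda>w. lbl (st w))"
  define rl where "rl = (\<lambda>w. rul (st w))"
  have inv: "wfd X (st w)" if "w \<in> nodes rl" for w
    using that
  proof (induction rule: nodes.induct)
    case root then show ?case using h0 st0 by simp
  next
    case (child w i)
    obtain r S a b where sw: "st w = DNode r S a b" using child.IH by (cases "st w") auto
    have ir: "i < arity r" using child.hyps sw by (simp add: rl_def)
    show ?case
    proof (cases "i = 0")
      case True then show ?thesis using child.IH sw ir by (simp add: st_snoc)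
    next
      case False
      then have "1 < arity r" using ir by simp
      then show ?thesis using child.IH sw False c
        by (cases b) (auto simp: st_snoc split: if_splits)
    qed
  qed
  have ok: "rule_ok lab (rl w) w" if wn: "w \<in> nodes rl" for w
  proof -
    obtain r S a b where sw: "st w = DNode r S a b" using inv[OF wn] by (cases "st w") auto
    have w: "wfd X (DNode r S a b)" using inv[OF wn] sw by metis
    show ?thesis
    proof (rule loc_ok_transfer[of _ _ _ "lbl b"])
      show "loc_ok (rl w) (lab w) (lab (w @ [0])) (lbl b)"
        using w sw by (simp add: lab_def rl_def st_snoc)
    next
      assume "arity (rl w) = 2"
      then have "arity r = 2" using sw by (simp add: rl_def)
      then show "lab (w @ [1]) = lbl b" using w sw c
        by (cases b) (auto simp: lab_def st_snoc split: if_splits)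
    qed
  qed
  have br: "\<forall>m. \<exists>n\<ge>m. rl (f n) = RBox \<and> f (Suc n) = f n @ [1]" if fb: "is_branch rl f" for f
  proof (rule ccontr)
    assume "\<not> ?thesis"
    then obtain m where hm: "\<forall>n\<ge>m. \<not> (rl (f n) = RBox \<and> f (Suc n) = f n @ [1])" by blast
    have fn: "f n \<in> nodes rl" for n
    proof (induction n)
      case 0 then show ?case using fb by (simp add: is_branch_def nodes.root)
    next
      case (Suc n)
      then show ?case using fb nodes.child unfolding is_branch_def by metis
    qed
    have "\<forall>n\<ge>m. size (st (f (Suc n))) < size (st (f n))"
    proof (intro allI impI)
      fix n assume "n \<ge> m"
      obtain r S a b where sw: "st (f n) = DNode r S a b" using inv[OF fn[of n]] by (cases "st (f n)") auto
      have w: "wfd X (DNode r S a b)" using inv[OF fn[of n]] sw by metis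
      have "\<exists>i<arity (rl (f n)). f (Suc n) = f n @ [i]" using fb unfolding is_branch_def by blast
      then obtain i where i: "i < arity r" "f (Suc n) = f n @ [i]"
        using sw unfolding rl_def by auto
      show "size (st (f (Suc n))) < size (st (f n))"
      proof (cases "i = 0")
        case True then show ?thesis using i sw by (simp add: st_snoc)
      next
        case False
        then have i1: "i = 1" "1 < arity r" using i arity_le[of r] by auto
        then have "r \<noteq> RBox" using hm \<open>n \<ge> m\<close> i sw by (auto simp: rl_def)
        then show ?thesis using w i i1 sw by (cases b) (auto simp: st_snoc)
      qed
    qed
    then show False using descent[of m "\<lambda>n. size (st (f n))"] by blast
  qed
  have "inf_proof lab rl" unfolding inf_proof_def using ok br by blast
  moreover have "lab [] = lbl t0" by (simp add: lab_def st0)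
  ultimately show ?thesis unfolding grz_inf_provable_def by blast
qed


definition PS :: "sequent set" where
  "PS = {S. \<exists>X. S \<in> X \<and> (\<forall>T\<in>X. D X (fst T) (snd T))}"

lemma post_PS: "\<forall>T\<in>Y. D Y (fst T) (snd T) \<Longrightarrow> Y \<subseteq> PS"
  unfolding PS_def by blast

lemma PS_D: "S \<in> PS \<Longrightarrow> D PS (fst S) (snd S)"
proof -
  assume "S \<in> PS"
  then obtain X where X: "S \<in> X" "\<forall>T\<in>X. D X (fst T) (snd T)" unfolding PS_def by blast
  then have "X \<subseteq> PS" using post_PS by blast
  then show ?thesis using X D_mono by blast
qed

lemma D_PS: "D PS G H \<Longrightarrow> (G, H) \<in> PS"
proof -
  assume h: "D PS G H"
  have "\<forall>T\<in>insert (G, H) PS. D (insert (G, H) PS) (fst T) (snd T)"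
    using h PS_D D_mono by (metis fst_conv insertE snd_conv subset_insertI)
  then show ?thesis using post_PS by blast
qed

lemma dextract: "D X G H \<Longrightarrow> \<exists>t. wfd X t \<and> lbl t = (G, H)"
proof (induction rule: D.induct)
  case (dax \<Gamma> p \<Delta>)
  show ?case
    by (rule exI[of _ "DNode RAx (\<Gamma> + {#Atom p#}, {#Atom p#} + \<Delta>) (DLeaf ({#},{#})) (DLeaf ({#},{#}))"])
       (auto simp: loc_ok_def)
next
  case (dbot \<Gamma> \<Delta>)
  show ?case
    by (rule exI[of _ "DNode RBot (\<Gamma> + {#Bot#}, \<Delta>) (DLeaf ({#},{#})) (DLeaf ({#},{#}))"])
       (auto simp: loc_ok_def)
next
  case (dimpL \<Gamma> B \<Delta> A)
  then obtain t0 t1 where "wfd X t0" "lbl t0 = (\<Gamma> + {#B#}, \<Delta>)" "wfd X t1" "lbl t1 = (\<Gamma>, {#A#} + \<Delta>)"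
    by blast
  then show ?case
    by (intro exI[of _ "DNode RImpL (\<Gamma> + {#Imp A B#}, \<Delta>) t0 t1"]) (auto simp: loc_ok_def)
next
  case (dimpR \<Gamma> A B \<Delta>)
  then obtain t0 where "wfd X t0" "lbl t0 = (\<Gamma> + {#A#}, {#B#} + \<Delta>)" by blast
  then show ?case
    by (intro exI[of _ "DNode RImpR (\<Gamma>, {#Imp A B#} + \<Delta>) t0 (DLeaf ({#},{#}))"]) (auto simp: loc_ok_def)
next
  case (drefl \<Gamma> B \<Delta>)
  then obtain t0 where "wfd X t0" "lbl t0 = (\<Gamma> + {#B#} + {#Box B#}, \<Delta>)" by blast
  then show ?case
    by (intro exI[of _ "DNode RRefl (\<Gamma> + {#Box B#}, \<Delta>) t0 (DLeaf ({#},{#}))"]) (auto simp: loc_ok_def)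
next
  case (dcut \<Gamma> A \<Delta>)
  then obtain t0 t1 where "wfd X t0" "lbl t0 = (\<Gamma>, {#A#} + \<Delta>)" "wfd X t1" "lbl t1 = (\<Gamma> + {#A#}, \<Delta>)"
    by blast
  then show ?case
    by (intro exI[of _ "DNode RCut (\<Gamma>, \<Delta>) t0 t1"]) (auto simp: loc_ok_def)
next
  case (dbox \<Gamma> \<Pi> A \<Delta>)
  then obtain t0 where "wfd X t0" "lbl t0 = (\<Gamma> + image_mset Box \<Pi>, {#A#} + \<Delta>)" by blast
  then show ?case using dbox.hyps(2)
    by (intro exI[of _ "DNode RBox (\<Gamma> + image_mset Box \<Pi>, {#Box A#} + \<Delta>) t0 (DLeaf (image_mset Box \<Pi>, {#A#}))"])
       (auto simp: loc_ok_def)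
qed

lemma PS_prov: "S \<in> PS \<Longrightarrow> grz_inf_provable S"
proof -
  assume "S \<in> PS"
  then obtain X where X: "S \<in> X" "\<forall>T\<in>X. D X (fst T) (snd T)" unfolding PS_def by blast
  have hX: "\<forall>S\<in>X. \<exists>t. wfd X t \<and> lbl t = S" using X(2) dextract by fastforce
  obtain t0 where "wfd X t0" "lbl t0 = S" using hX X(1) by blast
  then show ?thesis using thmA[OF hX] by metis
qed

lemma eqD: "D X G H \<Longrightarrow> G = G' \<Longrightarrow> H = H' \<Longrightarrow> D X G' H'" by simp

lemma impL': "D X (G + {#B#}) H \<Longrightarrow> D X G ({#A#} + H) \<Longrightarrow> \<Gamma> = G + {#Imp A B#} \<Longrightarrow> D X \<Gamma> H"
  using dimpL by blast
lemma impR': "D X (G + {#A#}) ({#B#} + H) \<Longrightarrow> \<Delta> = {#Imp A B#} + H \<Longrightarrow> D X G \<Delta>"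
  using dimpR by blast
lemma refl': "D X (G + {#B#} + {#Box B#}) H \<Longrightarrow> \<Gamma> = G + {#Box B#} \<Longrightarrow> D X \<Gamma> H"
  using drefl by blast
lemma box': "D X (G + image_mset Box \<Pi>) ({#A#} + H) \<Longrightarrow> (image_mset Box \<Pi>, {#A#}) \<in> X
   \<Longrightarrow> \<Gamma> = G + image_mset Box \<Pi> \<Longrightarrow> \<Delta> = {#Box A#} + H \<Longrightarrow> D X \<Gamma> \<Delta>"
  using dbox by blast

lemma ident: "D PS (\<Gamma> + {#A#}) ({#A#} + \<Delta>)"
proof (induction A arbitrary: \<Gamma> \<Delta>)
  case Bot
  show ?case by (rule dbot)
next
  case (Atom p)
  show ?case by (rule dax)
next
  case (Imp A B)
  have "D PS (\<Gamma> + {#A#} + {#B#}) ({#B#} + \<Delta>)" by (rule Imp.IH(2))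
  moreover have "D PS (\<Gamma> + {#A#}) ({#A#} + ({#B#} + \<Delta>))" by (rule Imp.IH(1))
  ultimately have "D PS (\<Gamma> + {#Imp A B#} + {#A#}) ({#B#} + \<Delta>)"
    by (rule impL') simp
  then show ?case by (rule impR') simp
next
  case (Box A)
  have "D PS (\<Gamma> + {#Box A#} + {#A#}) ({#A#} + \<Delta>)" by (rule Box.IH)
  then have h1: "D PS (\<Gamma> + {#Box A#}) ({#A#} + \<Delta>)"
    by (rule refl'[OF eqD]) simp_all
  have "D PS ({#Box A#} + {#A#}) ({#A#} + {#}) " by (rule Box.IH)
  then have "D PS {#Box A#} {#A#}"
    by (rule refl'[OF eqD, where G = "{#}"]) simp_all
  then have h2: "(image_mset Box {#A#}, {#A#}) \<in> PS" using D_PS by simp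
  show ?case by (rule box'[OF _ h2, where G = \<Gamma> and H = \<Delta>]) (use h1 in simp_all)
qed

lemma main: "grz_seq \<Gamma> \<Delta> \<Longrightarrow> D PS (\<Gamma> + G') (\<Delta> + H')"
proof (induction arbitrary: G' H' rule: grz_seq.induct)
  case (ax \<Gamma> A \<Delta>)
  show ?case using ident[of "\<Gamma> + G'" A "\<Delta> + H'"] by (rule eqD) (simp_all add: ac_simps)
next
  case (botL \<Gamma> \<Delta>)
  show ?case using dbot[of PS "\<Gamma> + G'" "\<Delta> + H'"] by (rule eqD) (simp_all add: ac_simps)
next
  case (impL \<Gamma> B \<Delta> A)
  have a: "D PS (\<Gamma> + G' + {#B#}) (\<Delta> + H')" using impL.IH(1)[of G' H'] by (rule eqD) (simp_all add: ac_simps)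
  have b: "D PS (\<Gamma> + G') ({#A#} + (\<Delta> + H'))" using impL.IH(2)[of G' H'] by (rule eqD) (simp_all add: ac_simps)
  show ?case using a b by (rule impL') (simp add: ac_simps)
next
  case (impR \<Gamma> A B \<Delta>)
  have a: "D PS (\<Gamma> + G' + {#A#}) ({#B#} + (\<Delta> + H'))" using impR.IH[of G' H'] by (rule eqD) (simp_all add: ac_simps)
  show ?case using a by (rule impR') (simp add: ac_simps)
next
  case (refl \<Gamma> B \<Delta>)
  have a: "D PS (\<Gamma> + G' + {#B#} + {#Box B#}) (\<Delta> + H')" using refl.IH[of G' H'] by (rule eqD) (simp_all add: ac_simps)
  show ?case using a by (rule refl') (simp add: ac_simps)
next
  case (cut \<Gamma> A \<Delta>)
  have a: "D PS (\<Gamma> + G') ({#A#} + (\<Delta> + H'))" using cut.IH(1)[of G' H'] by (rule eqD) (simp_all add: ac_simps)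
  have b: "D PS (\<Gamma> + G' + {#A#}) (\<Delta> + H')" using cut.IH(2)[of G' H'] by (rule eqD) (simp_all add: ac_simps)
  show ?case using a b by (rule dcut)
next
  case (boxGrz \<Pi> A \<Gamma> \<Delta>)
  define BP where "BP = image_mset Box \<Pi>"
  define C where "C = Box (Imp A (Box A))"
  define X0 where "X0 = (BP, {#A#})"
  define X1 where "X1 = (BP, {#Imp A (Box A)#})"
  define Y where "Y = insert X0 (insert X1 PS)"
  have PY: "PS \<subseteq> Y" unfolding Y_def by blast
  have IH: "D PS (BP + {#C#} + G) ({#A#} + H)" for G H
    using boxGrz.IH[of G H] unfolding BP_def C_def by simp
  have idY: "D Y (G + {#B#}) ({#B#} + H)" for G H B
    using ident D_mono PY by blast
  have Y0: "D Y BP {#A#}"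
  proof (rule dcut[where A = C])
    have "D Y (BP + {#A#}) ({#Box A#} + {#A#})" using idY[of BP A "{#Box A#}"] by (rule eqD) (simp_all add: ac_simps)
    then have "D Y BP ({#Imp A (Box A)#} + {#A#})" by (rule impR') simp
    then have "D Y ({#} + image_mset Box \<Pi>) ({#Imp A (Box A)#} + {#A#})" by (simp add: BP_def)
    then show "D Y BP ({#C#} + {#A#})" unfolding C_def
      by (rule box') (auto simp: Y_def X1_def BP_def)
    show "D Y (BP + {#C#}) {#A#}" using IH[of "{#}" "{#}"] PY D_mono by simp
  qed
  have Y1: "D Y BP {#Imp A (Box A)#}"
  proof (rule impR'[where H = "{#}"])
    have "D Y ({#A#} + BP) ({#A#} + {#})" using idY[of BP A "{#}"] by (rule eqD) (simp_all add: ac_simps)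
    then have "D Y ({#A#} + image_mset Box \<Pi>) ({#A#} + {#})" by (simp add: BP_def)
    then show "D Y (BP + {#A#}) ({#Box A#} + {#})"
      by (rule box') (auto simp: Y_def X0_def BP_def ac_simps)
  qed simp
  have "\<forall>T\<in>Y. D Y (fst T) (snd T)"
  proof
    fix T assume "T \<in> Y"
    then consider "T = X0" | "T = X1" | "T \<in> PS" unfolding Y_def by blast
    then show "D Y (fst T) (snd T)"
    proof cases
      case 1 then show ?thesis using Y0 by (simp add: X0_def)
    next
      case 2 then show ?thesis using Y1 by (simp add: X1_def)
    next
      case 3 then show ?thesis using PS_D D_mono PY by blast
    qed
  qed
  then have "Y \<subseteq> PS" by (rule post_PS)
  then have X0P: "(BP, {#A#}) \<in> PS" and X1P: "(BP, {#Imp A (Box A)#}) \<in> PS"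
    unfolding Y_def X0_def X1_def by auto
  let ?G = "\<Gamma> + G'" and ?H = "\<Delta> + H'"
  have L: "D PS (?G + BP) ({#A#} + ?H)"
  proof (rule dcut[where A = C])
    have "D PS (?G + BP + {#A#}) ({#Box A#} + ({#A#} + ?H))"
      using ident[of "?G + BP" A "{#Box A#} + ?H"] by (rule eqD) (simp_all add: ac_simps)
    then have "D PS (?G + BP) ({#Imp A (Box A)#} + ({#A#} + ?H))" by (rule impR') simp
    then have "D PS (?G + image_mset Box \<Pi>) ({#Imp A (Box A)#} + ({#A#} + ?H))" by (simp add: BP_def)
    then show "D PS (?G + BP) ({#C#} + ({#A#} + ?H))" unfolding C_def
      by (rule box') (use X1P in \<open>auto simp: BP_def\<close>)
    show "D PS (?G + BP + {#C#}) ({#A#} + ?H)"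
      using IH[of ?G ?H] by (rule eqD) (simp_all add: ac_simps)
  qed
  show ?case
    by (rule box'[OF L[unfolded BP_def]]) (use X0P in \<open>auto simp: BP_def ac_simps\<close>)
qed

theorem theorem3p4:
  fixes \<Gamma> \<Delta> :: "fm multiset"
  assumes "grz_seq \<Gamma> \<Delta>"
  shows "grz_inf_provable (\<Gamma>, \<Delta>)"
  using PS_prov[OF D_PS[OF main[OF assms, of "{#}" "{#}", simplified]]] .

end
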